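(* Let $\mathcal{X}\subset\mathbb{R}^n$ be closed convex, $P$ a probability distribution on a sample space $\mathcal{S}$, and for each $s$ let $f(\cdot;s):\mathbb{R}^n\to\mathbb{R}$ be closed convex and subdifferentiable on $\mathcal{X}$; let $F(x)=\mathbb{E}_P[f(x;S)]$ and $\mathcal{X}^\star=\arg\min_{x\in\mathcal{X}}F(x)$. Assume $F$ is easy to optimize: for each $x^\star\in\mathcal{X}^\star$ and $P$-almost all $s$, $\inf_{x\in\mathcal{X}}f(x;s)=f(x^\star;s)$. Suppose models $f_x(\cdot;s)$ ($x\in\mathcal{X}$, $s\in\mathcal{S}$) satisfy (C.i) $y\mapsto f_x(y;s)$ is convex and subdifferentiable on $\mathcal{X}$; (C.ii) $f_x(x;s)=f(x;s)$ and $f_x(y;s)\le f(y;s)$ for all $y$; (C.iii) $f_x(y;s)\ge\inf_{z\in\mathcal{X}}f(z;s)$ for all $y$ and all $s$. Let $x_1\in\mathcal{X}$, $\alpha_k>0$, $S_1,S_2,\ldots$ i.i.d. $\sim P$, and $x_{k+1}=\arg\min_{x\in\mathcal{X}}\{f_{x_k}(x;S_k)+\frac{1}{2\alpha_k}\|x-x_k\|_2^2\}$. Then for any $x^\star\in\mathcal{X}^\star$, $$\tfrac12\|x_{k+1}-x^\star\|_2^2\le\tfrac12\|x_k-x^\star\|_2^2-\tfrac12[f(x_k;S_k)-f(x^\star;S_k)]\min\left\{\alpha_k,\frac{f(x_k;S_k)-f(x^\star;S_k)}{\|f'(x_k;S_k)\|_2^2}\right\}.$$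
   Context: $f'(x_k;S_k)$ denotes an element of the subdifferential $\partial f(x_k;S_k)$. When $f(x_k;S_k)=f(x^\star;S_k)$ the subtracted term is $0$. *)

theory Defs
  imports "HOL-Probability.Probability"
begin

definition subdifferential :: "(real^'n \<Rightarrow> real) \<Rightarrow> real^'n \<Rightarrow> (real^'n) set" where
  "subdifferential h x = {g. \<forall>y. h y \<ge> h x + g \<bullet> (y - x)}"

definition subdifferentiable_on :: "(real^'n \<Rightarrow> real) \<Rightarrow> (real^'n) set \<Rightarrow> bool" where
  "subdifferentiable_on h X \<longleftrightarrow> (\<forall>x\<in>X. subdifferential h x \<noteq> {})"

definition pop_obj :: "'s measure \<Rightarrow> (real^'n \<Rightarrow> 's \<Rightarrow> real) \<Rightarrow> real^'n \<Rightarrow> real" where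
  "pop_obj P f x = (\<integral>s. f x s \<partial>P)"

definition sol_set :: "'s measure \<Rightarrow> (real^'n \<Rightarrow> 's \<Rightarrow> real) \<Rightarrow> (real^'n) set \<Rightarrow> (real^'n) set" where
  "sol_set P f X = {xs \<in> X. \<forall>x\<in>X. pop_obj P f xs \<le> pop_obj P f x}"

end

theory Submission
  imports Defs
begin

lemma norm_sq_expand:
  fixes u v :: "real^'n"
  shows "(norm (u + v))\<^sup>2 = (norm u)\<^sup>2 + 2 * (u \<bullet> v) + (norm v)\<^sup>2"
  by (simp add: power2_norm_eq_inner inner_add_left inner_add_right inner_commute)

lemma prox_three_point:
  fixes X :: "(real^'n) set" and \<phi> :: "real^'n \<Rightarrow> real"
  assumes cvx: "convex_on X \<phi>" and XC: "convex X" and c: "c > 0" and bX: "b \<in> X"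
    and opt: "\<forall>y\<in>X. \<phi> b + c * (norm (b - a))\<^sup>2 \<le> \<phi> y + c * (norm (y - a))\<^sup>2"
    and yX: "y \<in> X"
  shows "\<phi> b + c * (norm (b - a))\<^sup>2 + c * (norm (y - b))\<^sup>2 \<le> \<phi> y + c * (norm (y - a))\<^sup>2"
proof -
  define D where "D = \<phi> b - \<phi> y - 2 * c * ((y - b) \<bullet> (b - a))"
  define N where "N = (norm (y - b))\<^sup>2"
  have key: "t * D \<le> c * t\<^sup>2 * N" if t0: "0 < t" and t1: "t \<le> 1" for t
  proof -
    define yt where "yt = (1 - t) *\<^sub>R b + t *\<^sub>R y"
    have ytX: "yt \<in> X" using XC bX yX t0 t1 unfolding yt_def by (simp add: convex_def)
    have cv: "\<phi> yt \<le> (1 - t) * \<phi> b + t * \<phi> y"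
      using convex_onD[OF cvx, of t b y] t0 t1 bX yX unfolding yt_def by simp
    have eq: "yt - a = (b - a) + t *\<^sub>R (y - b)" unfolding yt_def by (simp add: algebra_simps)
    have n: "(norm (yt - a))\<^sup>2 = (norm (b - a))\<^sup>2 + 2 * t * ((y - b) \<bullet> (b - a)) + t\<^sup>2 * N"
      unfolding eq norm_sq_expand N_def by (simp add: power_mult_distrib inner_commute)
    have "\<phi> b + c * (norm (b - a))\<^sup>2 \<le> \<phi> yt + c * (norm (yt - a))\<^sup>2" using opt ytX by blast
    then show ?thesis using cv unfolding n D_def by (simp add: algebra_simps)
  qed
  have Dle: "D \<le> 0"
  proof (rule ccontr)
    assume "\<not> D \<le> 0"
    hence Dp: "D > 0" by simp
    have N0: "N \<ge> 0" unfolding N_def by simp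
    define t where "t = min 1 (D / (2 * c * N + 1))"
    have dp: "2 * c * N + 1 > 0" using c N0 by (simp add: add_nonneg_pos)
    have t0: "t > 0" unfolding t_def using Dp dp by simp
    have t1: "t \<le> 1" unfolding t_def by simp
    have "t * D \<le> c * t\<^sup>2 * N" using key t0 t1 by blast
    hence "D \<le> c * t * N" using t0 by (simp add: power2_eq_square algebra_simps)
    moreover have "c * t * N < D"
    proof -
      have "t \<le> D / (2 * c * N + 1)" unfolding t_def by (rule min.cobounded2)
      hence tt: "t * (2 * c * N + 1) \<le> D" using dp by (simp add: pos_le_divide_eq)
      have e: "t * (2 * c * N + 1) = 2 * (c * t * N) + t" by (simp add: algebra_simps)
      have "c * t * N \<ge> 0" using c t0 N0 by simp
      thus ?thesis using tt e t0 by linarith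
    qed
    ultimately show False by linarith
  qed
  have eq2: "y - a = (y - b) + (b - a)" by simp
  have na: "(norm (y - a))\<^sup>2 = N + 2 * ((y - b) \<bullet> (b - a)) + (norm (b - a))\<^sup>2"
    unfolding N_def by (subst eq2, rule norm_sq_expand)
  have pb: "\<phi> b \<le> \<phi> y + 2 * c * ((y - b) \<bullet> (b - a))" using Dle unfolding D_def by linarith
  have "c * (norm (y - a))\<^sup>2 = c * N + 2 * c * ((y - b) \<bullet> (b - a)) + c * (norm (b - a))\<^sup>2"
    unfolding na by (simp only: distrib_left mult.assoc)
  thus ?thesis using pb unfolding N_def by linarith
qed

lemma final_alg:
  fixes g u :: "real^'n"
  assumes al: "\<alpha> > 0" and hb1: "hb - fs \<ge> 0" and hb2: "hb \<ge> fa + g \<bullet> u" and dl: "fa - fs \<ge> 0"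
  shows "(fa - fs) * min \<alpha> ((fa - fs) / (norm g)\<^sup>2) \<le> 2 * \<alpha> * (hb - fs) + (norm u)\<^sup>2"
proof -
  define m where "m = min \<alpha> ((fa - fs) / (norm g)\<^sup>2)"
  have m0: "m \<ge> 0" unfolding m_def using al dl by simp
  have ma: "m \<le> \<alpha>" unfolding m_def by simp
  have mg: "m * (norm g)\<^sup>2 \<le> fa - fs"
  proof (cases "norm g = 0")
    case True thus ?thesis using dl by simp
  next
    case False
    hence "(norm g)\<^sup>2 > 0" by simp
    moreover have "m \<le> (fa - fs) / (norm g)\<^sup>2" unfolding m_def by simp
    ultimately show ?thesis by (simp add: pos_le_divide_eq mult.commute)
  qed
  have sq: "0 \<le> (norm u)\<^sup>2 + 2 * m * (g \<bullet> u) + m\<^sup>2 * (norm g)\<^sup>2"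
    using norm_sq_expand[of u "m *\<^sub>R g"] zero_le_power2[of "norm (u + m *\<^sub>R g)"]
    by (simp add: power_mult_distrib inner_commute algebra_simps)
  have a1: "\<alpha> * (hb - fs) \<ge> m * (hb - fs)" using ma hb1 by (simp add: mult_right_mono)
  have a2: "m * (hb - fs) \<ge> m * (fa - fs + g \<bullet> u)" using m0 hb2 by (simp add: mult_left_mono)
  have a3: "m\<^sup>2 * (norm g)\<^sup>2 \<le> m * (fa - fs)" using mg m0
    by (metis mult.assoc mult_left_mono power2_eq_square)
  have "(fa - fs) * m \<le> 2 * \<alpha> * (hb - fs) + (norm u)\<^sup>2"
    using a1 a2 a3 sq by (simp add: algebra_simps)
  thus ?thesis unfolding m_def .
qed

lemma combine:
  fixes al hb fs A B C mm :: real
  assumes al: "al > 0"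
    and tp: "hb + (1 / (2 * al)) * B + (1 / (2 * al)) * C \<le> hm + (1 / (2 * al)) * A"
    and hm: "hm \<le> fs"
    and fin: "mm \<le> 2 * al * (hb - fs) + B"
  shows "(1/2) * C \<le> (1/2) * A - (1/2) * mm"
proof -
  define c where "c = 1 / (2 * al)"
  have c1: "2 * al * c = 1" unfolding c_def using al by simp
  have "hb + c * B + c * C \<le> fs + c * A" using tp hm unfolding c_def by linarith
  hence "2 * al * (hb + c * B + c * C) \<le> 2 * al * (fs + c * A)" using al by (intro mult_left_mono) auto
  hence "2 * al * hb + (2 * al * c) * B + (2 * al * c) * C \<le> 2 * al * fs + (2 * al * c) * A"
    by (simp only: distrib_left mult.assoc)
  hence "2 * al * hb + B + C \<le> 2 * al * fs + A" unfolding c1 by simp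
  moreover have "2 * al * (hb - fs) = 2 * al * hb - 2 * al * fs" by (simp add: right_diff_distrib)
  ultimately show ?thesis using fin by linarith
qed

theorem lemma5:
  fixes X :: "(real^'n) set"
    and P :: "'s measure"
    and f :: "real^'n \<Rightarrow> 's \<Rightarrow> real"
    and mdl :: "real^'n \<Rightarrow> real^'n \<Rightarrow> 's \<Rightarrow> real"
    and M :: "'w measure"
    and S :: "nat \<Rightarrow> 'w \<Rightarrow> 's"
    and \<alpha> :: "nat \<Rightarrow> real"
    and x :: "nat \<Rightarrow> 'w \<Rightarrow> real^'n"
    and g :: "nat \<Rightarrow> 'w \<Rightarrow> real^'n"
    and xs :: "real^'n"
  assumes X_closed: "closed X" and X_convex: "convex X"
    and P_prob: "prob_space P"
    and f_convex: "\<forall>s\<in>space P. convex_on UNIV (\<lambda>y. f y s)"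
    and f_subdiff: "\<forall>s\<in>space P. subdifferentiable_on (\<lambda>y. f y s) X"
    and easy: "\<forall>xs'\<in>sol_set P f X. AE s in P. (INF z\<in>X. ereal (f z s)) = ereal (f xs' s)"
    and C_i: "\<forall>x0\<in>X. \<forall>s\<in>space P. convex_on X (\<lambda>y. mdl x0 y s) \<and> subdifferentiable_on (\<lambda>y. mdl x0 y s) X"
    and C_ii: "\<forall>x0\<in>X. \<forall>s\<in>space P. mdl x0 x0 s = f x0 s \<and> (\<forall>y. mdl x0 y s \<le> f y s)"
    and C_iii: "\<forall>x0\<in>X. \<forall>s\<in>space P. \<forall>y. (INF z\<in>X. ereal (f z s)) \<le> ereal (mdl x0 y s)"
    and M_prob: "prob_space M"
    and S_meas: "\<forall>k. S k \<in> measurable M P"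
    and S_distr: "\<forall>k. distr M P (S k) = P"
    and S_indep: "prob_space.indep_vars M (\<lambda>_. P) S UNIV"
    and x1: "\<forall>\<omega>\<in>space M. x 1 \<omega> \<in> X"
    and \<alpha>_pos: "\<forall>k\<ge>1. \<alpha> k > 0"
    and x_step: "\<forall>k\<ge>1. \<forall>\<omega>\<in>space M. x (k+1) \<omega> \<in> X \<and>
        (\<forall>y\<in>X. mdl (x k \<omega>) (x (k+1) \<omega>) (S k \<omega>) + (1 / (2 * \<alpha> k)) * (norm (x (k+1) \<omega> - x k \<omega>))\<^sup>2
               \<le> mdl (x k \<omega>) y (S k \<omega>) + (1 / (2 * \<alpha> k)) * (norm (y - x k \<omega>))\<^sup>2)"
    and g_sub: "\<forall>k\<ge>1. \<forall>\<omega>\<in>space M. g k \<omega> \<in> subdifferential (\<lambda>y. f y (S k \<omega>)) (x k \<omega>)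
        \<and> g k \<omega> \<in> subdifferential (\<lambda>y. mdl (x k \<omega>) y (S k \<omega>)) (x k \<omega>)"
    and xs_opt: "xs \<in> sol_set P f X"
  shows "AE \<omega> in M. \<forall>k\<ge>1.
      (1/2) * (norm (x (k+1) \<omega> - xs))\<^sup>2
        \<le> (1/2) * (norm (x k \<omega> - xs))\<^sup>2
           - (1/2) * (f (x k \<omega>) (S k \<omega>) - f xs (S k \<omega>))
             * min (\<alpha> k) ((f (x k \<omega>) (S k \<omega>) - f xs (S k \<omega>)) / (norm (g k \<omega>))\<^sup>2)"
proof -
  have xX: "x k \<omega> \<in> X" if "k \<ge> 1" "\<omega> \<in> space M" for k \<omega>
  proof (cases "k = 1")
    case True thus ?thesis using x1 that by simp
  next
    case False
    define j where "j = k - 1"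
    have j: "k = j + 1" "j \<ge> 1" using that False unfolding j_def by auto
    thus ?thesis using x_step[rule_format, OF j(2) that(2)] by simp
  qed
  have xsX: "xs \<in> X" using xs_opt unfolding sol_set_def by simp
  have AEk: "AE \<omega> in M. (INF z\<in>X. ereal (f z (S k \<omega>))) = ereal (f xs (S k \<omega>))" for k
  proof -
    have "AE s in P. (INF z\<in>X. ereal (f z s)) = ereal (f xs s)" using easy xs_opt by blast
    moreover have d: "distr M P (S k) = P" using S_distr by blast
    ultimately have "AE s in distr M P (S k). (INF z\<in>X. ereal (f z s)) = ereal (f xs s)" by (simp only: d)
    thus ?thesis using AE_distrD[of "S k" M P] S_meas by blast
  qed
  hence "AE \<omega> in M. \<forall>k. (INF z\<in>X. ereal (f z (S k \<omega>))) = ereal (f xs (S k \<omega>))"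
    by (simp add: AE_all_countable)
  with AE_space show ?thesis
  proof eventually_elim
    case (elim \<omega>)
    show ?case
    proof (intro allI impI)
      fix k :: nat assume k: "k \<ge> 1"
      have wM: "\<omega> \<in> space M" using elim(1) .
      have QQ: "(INF z\<in>X. ereal (f z (S k \<omega>))) = ereal (f xs (S k \<omega>))" using elim(2) by (rule spec)
      have step: "x (k+1) \<omega> \<in> X \<and>
        (\<forall>y\<in>X. mdl (x k \<omega>) (x (k+1) \<omega>) (S k \<omega>) + (1 / (2 * \<alpha> k)) * (norm (x (k+1) \<omega> - x k \<omega>))\<^sup>2
               \<le> mdl (x k \<omega>) y (S k \<omega>) + (1 / (2 * \<alpha> k)) * (norm (y - x k \<omega>))\<^sup>2)"
        by (rule x_step[rule_format, OF k wM])
      have gsub: "g k \<omega> \<in> subdifferential (\<lambda>y. f y (S k \<omega>)) (x k \<omega>)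
        \<and> g k \<omega> \<in> subdifferential (\<lambda>y. mdl (x k \<omega>) y (S k \<omega>)) (x k \<omega>)"
        by (rule g_sub[rule_format, OF k wM])
      define a where "a = x k \<omega>"
      define b where "b = x (k+1) \<omega>"
      define s where "s = S k \<omega>"
      define fs where "fs = f xs s"
      define fa where "fa = f a s"
      define hb where "hb = mdl a b s"
      have aX: "a \<in> X" unfolding a_def using xX[OF k wM] .
      have bX: "b \<in> X" unfolding b_def using step by (rule conjunct1)
      have sP: "s \<in> space P" unfolding s_def by (rule measurable_space[OF S_meas[rule_format] wM])
      have al: "\<alpha> k > 0" using \<alpha>_pos k by simp
      have Q: "(INF z\<in>X. ereal (f z s)) = ereal fs" using QQ unfolding s_def fs_def .
      have "(INF z\<in>X. ereal (f z s)) \<le> ereal fa" unfolding fa_def using aX by (rule INF_lower)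
      hence dl: "fa - fs \<ge> 0" using Q by simp
      have "(INF z\<in>X. ereal (f z s)) \<le> ereal hb" unfolding hb_def by (rule C_iii[rule_format, OF aX sP])
      hence hb1: "hb - fs \<ge> 0" using Q by simp
      have gs: "g k \<omega> \<in> subdifferential (\<lambda>y. mdl a y s) a"
        using gsub unfolding a_def s_def by (rule conjunct2)
      have hb2: "hb \<ge> fa + g k \<omega> \<bullet> (b - a)"
      proof -
        have "mdl a b s \<ge> mdl a a s + g k \<omega> \<bullet> (b - a)" using gs unfolding subdifferential_def by blast
        moreover have "mdl a a s = f a s" using C_ii[rule_format, OF aX sP] by (rule conjunct1)
        ultimately show ?thesis unfolding hb_def fa_def by simp
      qed
      have cvx: "convex_on X (\<lambda>y. mdl a y s)" using C_i[rule_format, OF aX sP] by (rule conjunct1)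
      have opt: "\<forall>y\<in>X. mdl a b s + (1 / (2 * \<alpha> k)) * (norm (b - a))\<^sup>2 \<le> mdl a y s + (1 / (2 * \<alpha> k)) * (norm (y - a))\<^sup>2"
        using step unfolding a_def b_def s_def by (rule conjunct2)
      have c0: "1 / (2 * \<alpha> k) > 0" using al by simp
      have tp: "mdl a b s + (1 / (2 * \<alpha> k)) * (norm (b - a))\<^sup>2 + (1 / (2 * \<alpha> k)) * (norm (xs - b))\<^sup>2 \<le> mdl a xs s + (1 / (2 * \<alpha> k)) * (norm (xs - a))\<^sup>2"
        by (rule prox_three_point[OF cvx X_convex c0 bX opt xsX])
      have hm: "mdl a xs s \<le> fs" using C_ii[rule_format, OF aX sP] unfolding fs_def by (rule conjunct2[THEN spec])
      have fin: "(fa - fs) * min (\<alpha> k) ((fa - fs) / (norm (g k \<omega>))\<^sup>2) \<le> 2 * \<alpha> k * (hb - fs) + (norm (b - a))\<^sup>2"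
        by (rule final_alg[OF al hb1 hb2 dl])
      have n1: "norm (xs - b) = norm (b - xs)" "norm (xs - a) = norm (a - xs)" by (simp_all only: norm_minus_commute)
      define mm where "mm = (fa - fs) * min (\<alpha> k) ((fa - fs) / (norm (g k \<omega>))\<^sup>2)"
      have fin2: "mm \<le> 2 * \<alpha> k * (hb - fs) + (norm (b - a))\<^sup>2" using fin unfolding mm_def .
      have "(1/2) * (norm (xs - b))\<^sup>2 \<le> (1/2) * (norm (xs - a))\<^sup>2 - (1/2) * mm"
        by (rule combine[OF al tp[folded hb_def] hm fin2])
      then have "(1/2) * (norm (b - xs))\<^sup>2 \<le> (1/2) * (norm (a - xs))\<^sup>2 - (1/2) * mm"
        unfolding n1 .
      then show "(1/2) * (norm (x (k+1) \<omega> - xs))\<^sup>2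
        \<le> (1/2) * (norm (x k \<omega> - xs))\<^sup>2
           - (1/2) * (f (x k \<omega>) (S k \<omega>) - f xs (S k \<omega>))
             * min (\<alpha> k) ((f (x k \<omega>) (S k \<omega>) - f xs (S k \<omega>)) / (norm (g k \<omega>))\<^sup>2)"
        unfolding mm_def a_def b_def s_def fs_def fa_def by (simp only: mult.assoc)
    qed
  qed
qed

end
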